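(* Let $n\ge1$, $\mathcal{K}=\{\texttt{a},\texttt{b}\}$, $\epsilon\ge0$ and $p=e^\epsilon/(1+e^\epsilon)$. For the uniform prior $\pi$ on $\mathcal{K}^n$ and the single-target gain function $g_{\rm T}$, $$V_{\rm T}[\pi\triangleright\mathbf{N}\mathbf{S}]=\frac12+\frac{1}{2^n}(2p-1)\binom{n-1}{\lfloor\frac{n-1}{2}\rfloor}.$$
   Context: A dataset is $x=(x_0,\dots,x_{n-1})\in\mathcal{K}^n$; its histogram $h(x)$ is the map $\kappa\mapsto|\{i:x_i=\kappa\}|$; $\#z$ is the number of datasets with histogram $z$. Full $k$-RR channel (with $k=2$) $\mathbf{N}:\mathcal{K}^n\to\mathcal{K}^n$: $\mathbf{N}_{x,y}=\prod_{i}q(y_i\mid x_i)$, $q(b\mid a)=p$ if $b=a$, $1-p$ otherwise. Shuffle channel $\mathbf{S}:\mathcal{K}^n\to\mathcal{K}^n$: $\mathbf{S}_{x,y}=1/\#h(x)$ if $h(y)=h(x)$, else $0$. $\mathbf{N}\mathbf{S}$ is the matrix product. Uniform prior $\pi_x=1/2^n$. Single-target gain function: $\mathcal{W}=\mathcal{K}$, $g_{\rm T}(w,x)=1$ if $x_0=w$, else $0$. Posterior vulnerability: $V_{\rm T}[\pi\triangleright\mathbf{C}]=\sum_{y}\max_{w}\sum_{x}\pi_x\mathbf{C}_{x,y}g_{\rm T}(w,x)$. *)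

theory Defs
  imports Complex_Main
begin

datatype K = A | B

definition datasets :: "nat \<Rightarrow> K list set" where
  "datasets n = {x. length x = n}"

definition hist :: "K list \<Rightarrow> K \<Rightarrow> nat" where
  "hist x = (\<lambda>\<kappa>. card {i. i < length x \<and> x ! i = \<kappa>})"

definition numHist :: "nat \<Rightarrow> (K \<Rightarrow> nat) \<Rightarrow> nat" where
  "numHist n z = card {x \<in> datasets n. hist x = z}"

definition krr :: "real \<Rightarrow> K \<Rightarrow> K \<Rightarrow> real" where
  "krr p b a = (if b = a then p else 1 - p)"

definition Nch :: "nat \<Rightarrow> real \<Rightarrow> K list \<Rightarrow> K list \<Rightarrow> real" where
  "Nch n p x y = (\<Prod>i<n. krr p (y ! i) (x ! i))"

definition Sch :: "nat \<Rightarrow> K list \<Rightarrow> K list \<Rightarrow> real" where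
  "Sch n x y = (if hist y = hist x then 1 / real (numHist n (hist x)) else 0)"

definition NSch :: "nat \<Rightarrow> real \<Rightarrow> K list \<Rightarrow> K list \<Rightarrow> real" where
  "NSch n p x y = (\<Sum>z\<in>datasets n. Nch n p x z * Sch n z y)"

definition prior :: "nat \<Rightarrow> K list \<Rightarrow> real" where
  "prior n x = 1 / 2 ^ n"

definition gT :: "K \<Rightarrow> K list \<Rightarrow> real" where
  "gT w x = (if x ! 0 = w then 1 else 0)"

definition postVulnT :: "nat \<Rightarrow> (K list \<Rightarrow> real) \<Rightarrow> (K list \<Rightarrow> K list \<Rightarrow> real) \<Rightarrow> real" where
  "postVulnT n \<pi> C =
     (\<Sum>y\<in>datasets n. Max ((\<lambda>w. \<Sum>x\<in>datasets n. \<pi> x * C x y * gT w x) ` {A, B}))"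

end

theory Submission
  imports Defs
begin

lemma UNIV_K: "(UNIV::K set) = {A, B}"
  using K.exhaust by auto

lemma finite_datasets: "finite (datasets n)"
proof -
  have "datasets n \<subseteq> {xs. set xs \<subseteq> {A, B} \<and> length xs = n}"
    unfolding datasets_def using UNIV_K by auto
  moreover have "finite {xs. set xs \<subseteq> {A, B} \<and> length xs = n}"
    by (rule finite_lists_length_eq) simp
  ultimately show ?thesis by (rule finite_subset)
qed

lemma datasets_0: "datasets 0 = {[]}"
  unfolding datasets_def by auto

lemma datasets_Suc: "datasets (Suc m) = Cons A ` datasets m \<union> Cons B ` datasets m"
proof
  show "datasets (Suc m) \<subseteq> Cons A ` datasets m \<union> Cons B ` datasets m"
  proof
    fix x assume "x \<in> datasets (Suc m)"
    then obtain c x' where x: "x = c # x'" "length x' = m"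
      unfolding datasets_def by (cases x) auto
    then show "x \<in> Cons A ` datasets m \<union> Cons B ` datasets m"
      unfolding datasets_def by (cases c) auto
  qed
qed (auto simp: datasets_def)

lemma sum_Suc:
  "(\<Sum>z\<in>datasets (Suc m). f z) = (\<Sum>z\<in>datasets m. f (A # z)) + (\<Sum>z\<in>datasets m. f (B # z))"
proof -
  have "(\<Sum>z\<in>datasets (Suc m). f z) = sum f (Cons A ` datasets m) + sum f (Cons B ` datasets m)"
    unfolding datasets_Suc
    by (rule sum.union_disjoint) (auto simp: finite_datasets)
  also have "\<dots> = (\<Sum>z\<in>datasets m. f (A # z)) + (\<Sum>z\<in>datasets m. f (B # z))"
    by (simp add: sum.reindex)
  finally show ?thesis .
qed

definition cB :: "K list \<Rightarrow> nat" where
  "cB z = length (filter (\<lambda>c. c = B) z)"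

lemma cB_simps [simp]: "cB [] = 0" "cB (A # z) = cB z" "cB (B # z) = Suc (cB z)"
  by (auto simp: cB_def)

lemma cA_cB: "length (filter (\<lambda>c. c = A) x) + cB x = length x"
proof (induction x)
  case (Cons a x) then show ?case by (cases a) (auto simp: cB_def)
qed (simp add: cB_def)

lemma hist_alt: "hist x \<kappa> = length (filter (\<lambda>c. c = \<kappa>) x)"
  unfolding hist_def by (simp add: length_filter_conv_card)

lemma hist_eq_iff:
  assumes "length x = length y"
  shows "hist x = hist y \<longleftrightarrow> cB x = cB y"
proof
  assume "hist x = hist y" then show "cB x = cB y"
    by (metis cB_def hist_alt)
next
  assume h: "cB x = cB y"
  show "hist x = hist y"
  proof
    fix \<kappa> show "hist x \<kappa> = hist y \<kappa>"
      using h assms cA_cB[of x] cA_cB[of y] by (cases \<kappa>) (auto simp: hist_alt cB_def)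
  qed
qed

lemma cnt: "(\<Sum>z\<in>datasets m. if cB z = k then 1 else 0 :: real) = real (m choose k)"
proof (induction m arbitrary: k)
  case 0 then show ?case by (simp add: datasets_0)
next
  case (Suc m)
  show ?case
  proof (cases k)
    case 0 then show ?thesis using Suc[of 0] by (simp add: sum_Suc)
  next
    case (Suc k')
    then show ?thesis using Suc.IH[of k] Suc.IH[of k'] by (simp add: sum_Suc)
  qed
qed

lemma Nch_Cons: "Nch (Suc m) p (a # x) (c # z) = krr p c a * Nch m p x z"
  unfolding Nch_def prod.lessThan_Suc_shift by simp

lemma L1: "z \<in> datasets m \<Longrightarrow> (\<Sum>x\<in>datasets m. Nch m p x z) = 1"
proof (induction m arbitrary: z)
  case 0 then show ?case by (simp add: datasets_0 Nch_def)
next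
  case (Suc m)
  then obtain c z' where z: "z = c # z'" "z' \<in> datasets m"
    unfolding datasets_def by (cases z) auto
  show ?case using Suc.IH[OF z(2)]
    by (cases c; simp add: z sum_Suc Nch_Cons sum_distrib_left[symmetric] krr_def)
qed

lemma L2: "z \<in> datasets (Suc m) \<Longrightarrow> (\<Sum>x\<in>datasets (Suc m). gT w x * Nch (Suc m) p x z) = krr p (z ! 0) w"
proof -
  assume "z \<in> datasets (Suc m)"
  then obtain c z' where z: "z = c # z'" "z' \<in> datasets m"
    unfolding datasets_def by (cases z) auto
  show ?thesis using L1[OF z(2), of p]
    by (cases w; cases c; simp add: z sum_Suc Nch_Cons sum_distrib_left[symmetric] gT_def krr_def)
qed


lemma Sch_alt:
  assumes "y \<in> datasets n" "z \<in> datasets n"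
  shows "Sch n z y = (if cB z = cB y then 1 / real (n choose cB y) else 0)"
proof -
  have len: "length y = n" "length z = n" using assms by (auto simp: datasets_def)
  have nh: "numHist n (hist z) = card {x \<in> datasets n. cB x = cB z}"
    unfolding numHist_def
    by (rule arg_cong[where f=card]) (auto simp: datasets_def len hist_eq_iff)
  have "real (card {x \<in> datasets n. cB x = cB z}) = (\<Sum>x\<in>datasets n. if cB x = cB z then 1 else 0 :: real)"
    by (simp add: sum.inter_filter[symmetric] finite_datasets)
  also have "\<dots> = real (n choose cB z)" by (rule cnt)
  finally have "real (numHist n (hist z)) = real (n choose cB z)" using nh by simp
  then show ?thesis
    unfolding Sch_def using hist_eq_iff[of y z] len by auto
qed

lemma sum_if_const: "(\<Sum>z\<in>S. if P z then c else 0) = (c::real) * (\<Sum>z\<in>S. if P z then 1 else 0)"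
  unfolding sum_distrib_left by (rule sum.cong) auto

lemma sum_k:
  "(\<Sum>z\<in>datasets (Suc m). if cB z = k then krr p (z ! 0) w else 0) =
     krr p A w * real (m choose k) + krr p B w * real (if k = 0 then 0 else m choose (k - 1))"
proof (cases k)
  case 0
  have e1: "(\<Sum>z\<in>datasets m. if cB z = k then krr p A w else 0) = krr p A w * real (m choose k)"
    using cnt[where m=m and k=k] by (subst sum_if_const) simp
  show ?thesis unfolding sum_Suc nth_Cons_0 using e1 0 by simp
next
  case (Suc k')
  have e1: "(\<Sum>z\<in>datasets m. if cB z = k then krr p A w else 0) = krr p A w * real (m choose k)"
    using cnt[where m=m and k=k] by (subst sum_if_const) simp
  have e2: "(\<Sum>z\<in>datasets m. if cB z = k' then krr p B w else 0) = krr p B w * real (m choose k')"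
    using cnt[where m=m and k=k'] by (subst sum_if_const) simp
  show ?thesis unfolding sum_Suc nth_Cons_0 using e1 e2 Suc by simp
qed

lemma per_y:
  assumes y: "y \<in> datasets (Suc m)"
  shows "(\<Sum>x\<in>datasets (Suc m). prior (Suc m) x * NSch (Suc m) p x y * gT w x) =
    1 / 2 ^ Suc m / real (Suc m choose cB y) *
      (krr p A w * real (m choose cB y) + krr p B w * real (if cB y = 0 then 0 else m choose (cB y - 1)))"
proof -
  let ?n = "Suc m" and ?k = "cB y"
  have ns: "NSch ?n p x y = (\<Sum>z\<in>datasets ?n. if cB z = ?k then Nch ?n p x z else 0) / real (?n choose ?k)" for x
    unfolding NSch_def sum_divide_distrib
    by (rule sum.cong) (auto simp: Sch_alt[OF y])
  have "(\<Sum>x\<in>datasets ?n. prior ?n x * NSch ?n p x y * gT w x) =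
      (\<Sum>x\<in>datasets ?n. \<Sum>z\<in>datasets ?n. 1 / 2 ^ ?n / real (?n choose ?k) * (if cB z = ?k then gT w x * Nch ?n p x z else 0))"
    unfolding ns prior_def
  proof (rule sum.cong[OF refl])
    fix x
    have "(\<Sum>z\<in>datasets ?n. 1 / 2 ^ ?n / real (?n choose ?k) * (if cB z = ?k then gT w x * Nch ?n p x z else 0))
      = (1 / 2 ^ ?n / real (?n choose ?k) * gT w x) * (\<Sum>z\<in>datasets ?n. if cB z = ?k then Nch ?n p x z else 0)"
      unfolding sum_distrib_left by (rule sum.cong[OF refl]) simp
    then show "1 / 2 ^ ?n * ((\<Sum>z\<in>datasets ?n. if cB z = ?k then Nch ?n p x z else 0) / real (?n choose ?k)) * gT w x
      = (\<Sum>z\<in>datasets ?n. 1 / 2 ^ ?n / real (?n choose ?k) * (if cB z = ?k then gT w x * Nch ?n p x z else 0))"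
      by simp
  qed
  also have "\<dots> = (\<Sum>z\<in>datasets ?n. 1 / 2 ^ ?n / real (?n choose ?k) * (if cB z = ?k then (\<Sum>x\<in>datasets ?n. gT w x * Nch ?n p x z) else 0))"
  proof (subst sum.swap, rule sum.cong[OF refl])
    fix z
    show "(\<Sum>x\<in>datasets ?n. 1 / 2 ^ ?n / real (?n choose ?k) * (if cB z = ?k then gT w x * Nch ?n p x z else 0)) =
      1 / 2 ^ ?n / real (?n choose ?k) * (if cB z = ?k then (\<Sum>x\<in>datasets ?n. gT w x * Nch ?n p x z) else 0)"
      by (cases "cB z = ?k") (simp_all add: sum_distrib_left)
  qed
  also have "\<dots> = 1 / 2 ^ ?n / real (?n choose ?k) * (\<Sum>z\<in>datasets ?n. if cB z = ?k then krr p (z ! 0) w else 0)"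
    unfolding sum_distrib_left
    by (rule sum.cong) (auto simp: L2)
  also have "\<dots> = 1 / 2 ^ ?n / real (?n choose ?k) *
      (krr p A w * real (m choose ?k) + krr p B w * real (if ?k = 0 then 0 else m choose (?k - 1)))"
    by (simp only: sum_k)
  finally show ?thesis .
qed


lemma abs_sum:
  fixes m :: nat
  defines "g \<equiv> \<lambda>j. real (if j = 0 then 0 else m choose (j - 1))"
  shows "(\<Sum>k\<le>Suc m. \<bar>g (Suc k) - g k\<bar>) = 2 * real (m choose (m div 2))"
proof -
  let ?h = "m div 2"
  have mono1: "g k \<le> g (Suc k)" if "k < Suc ?h" for k
  proof (cases k)
    case 0 then show ?thesis by (simp add: g_def)
  next
    case (Suc k')
    have "m choose k' \<le> m choose k" using that Suc by (intro binomial_mono) auto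
    then show ?thesis by (simp add: g_def Suc)
  qed
  have mono2: "g (Suc k) \<le> g k" if "Suc ?h \<le> k" "k < Suc (Suc m)" for k
  proof (cases "k = Suc m")
    case True then show ?thesis by (simp add: g_def binomial_eq_0)
  next
    case False
    have "m choose k \<le> m choose (k - 1)" using that False by (intro binomial_antimono) auto
    then show ?thesis using that by (simp add: g_def)
  qed
  have "(\<Sum>k\<le>Suc m. \<bar>g (Suc k) - g k\<bar>) = (\<Sum>k=0..<Suc (Suc m). \<bar>g (Suc k) - g k\<bar>)"
    by (rule sum.cong) auto
  also have "\<dots> = (\<Sum>k=0..<Suc ?h. \<bar>g (Suc k) - g k\<bar>) + (\<Sum>k=Suc ?h..<Suc (Suc m). \<bar>g (Suc k) - g k\<bar>)"
    by (rule sum.atLeastLessThan_concat[symmetric]) auto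
  also have "(\<Sum>k=0..<Suc ?h. \<bar>g (Suc k) - g k\<bar>) = (\<Sum>k=0..<Suc ?h. g (Suc k) - g k)"
    by (rule sum.cong) (use mono1 in auto)
  also have "\<dots> = g (Suc ?h) - g 0" by (rule sum_Suc_diff') simp
  also have "(\<Sum>k=Suc ?h..<Suc (Suc m). \<bar>g (Suc k) - g k\<bar>) = - (\<Sum>k=Suc ?h..<Suc (Suc m). g (Suc k) - g k)"
    unfolding sum_negf[symmetric] by (rule sum.cong) (use mono2 in auto)
  also have "(\<Sum>k=Suc ?h..<Suc (Suc m). g (Suc k) - g k) = g (Suc (Suc m)) - g (Suc ?h)"
    by (rule sum_Suc_diff') simp
  finally show ?thesis by (simp add: g_def)
qed

lemma max_lemma:
  fixes p a b :: real
  assumes "p \<ge> 1/2"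
  shows "max (p * b + (1 - p) * a) ((1 - p) * b + p * a) = (a + b) / 2 + (2 * p - 1) / 2 * \<bar>b - a\<bar>"
proof (cases "a \<le> b")
  case True
  have "0 \<le> (2*p-1)*(b-a)" using True assms by simp
  then have "(1 - p) * b + p * a \<le> p * b + (1 - p) * a"
    by (simp add: algebra_simps)
  then have "max (p * b + (1 - p) * a) ((1 - p) * b + p * a) = p * b + (1 - p) * a" by simp
  moreover have "p * b + (1 - p) * a = (a + b) / 2 + (2 * p - 1) / 2 * (b - a)" by (simp add: field_simps)
  ultimately show ?thesis using True by simp
next
  case False
  have "0 \<le> (2*p-1)*(a-b)" using False assms by simp
  then have "p * b + (1 - p) * a \<le> (1 - p) * b + p * a"
    by (simp add: algebra_simps)
  then have "max (p * b + (1 - p) * a) ((1 - p) * b + p * a) = (1 - p) * b + p * a" by simp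
  moreover have "(1 - p) * b + p * a = (a + b) / 2 + (2 * p - 1) / 2 * (a - b)" by (simp add: field_simps)
  ultimately show ?thesis using False by simp
qed

lemma group_cB:
  "(\<Sum>y\<in>datasets n. F (cB y)) = (\<Sum>k\<le>n. F k * real (n choose k))"
proof -
  have "(\<Sum>y\<in>datasets n. F (cB y)) = (\<Sum>y\<in>datasets n. \<Sum>k\<le>n. if cB y = k then F k else 0)"
  proof (rule sum.cong[OF refl])
    fix y assume "y \<in> datasets n"
    then have "cB y \<le> n" by (auto simp: datasets_def cB_def intro: order.trans[OF length_filter_le])
    then show "F (cB y) = (\<Sum>k\<le>n. if cB y = k then F k else 0)" by simp
  qed
  also have "\<dots> = (\<Sum>k\<le>n. \<Sum>y\<in>datasets n. if cB y = k then F k else 0)"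
    by (rule sum.swap)
  also have "\<dots> = (\<Sum>k\<le>n. F k * real (n choose k))"
    by (rule sum.cong[OF refl]) (subst sum_if_const, simp add: cnt)
  finally show ?thesis .
qed


lemma max_scale: "(0::real) \<le> c \<Longrightarrow> max (c * u) (c * v) = c * max u v"
  by (cases "u \<le> v") (auto simp: max_def mult_left_mono order.antisym)

theorem mainTheorem12:
  fixes n :: nat and \<epsilon> p :: real
  assumes "n \<ge> 1" and "\<epsilon> \<ge> 0" and "p = exp \<epsilon> / (1 + exp \<epsilon>)"
  shows "postVulnT n (prior n) (NSch n p) =
           1 / 2 + 1 / 2 ^ n * (2 * p - 1) * real ((n - 1) choose ((n - 1) div 2))"
proof -
  obtain m where n: "n = Suc m" using assms(1) by (cases n) auto
  have "exp \<epsilon> \<ge> 1" using assms(2) by simp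
  moreover have "(0::real) < 1 + exp \<epsilon>" by (simp add: add_pos_pos)
  ultimately have p2: "p \<ge> 1/2" unfolding assms(3) by (simp add: field_simps del: one_le_exp_iff)
  define g where "g = (\<lambda>j. real (if j = 0 then 0 else m choose (j - 1)))"
  define M where "M = (\<lambda>k. max (p * g (Suc k) + (1 - p) * g k) ((1 - p) * g (Suc k) + p * g k))"
  define F where "F = (\<lambda>k. 1 / 2 ^ Suc m / real (Suc m choose k) * M k)"
  have gS: "g (Suc k) = real (m choose k)" for k by (simp add: g_def)
  have "postVulnT n (prior n) (NSch n p) = (\<Sum>y\<in>datasets (Suc m). F (cB y))"
    unfolding postVulnT_def n
  proof (rule sum.cong[OF refl])
    fix y assume y: "y \<in> datasets (Suc m)"
    show "Max ((\<lambda>w. \<Sum>x\<in>datasets (Suc m). prior (Suc m) x * NSch (Suc m) p x y * gT w x) ` {A, B}) = F (cB y)"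
    proof -
      let ?c = "1 / 2 ^ Suc m / real (Suc m choose cB y)"
      have "Max ((\<lambda>w. \<Sum>x\<in>datasets (Suc m). prior (Suc m) x * NSch (Suc m) p x y * gT w x) ` {A, B})
        = max (?c * (p * g (Suc (cB y)) + (1 - p) * g (cB y))) (?c * ((1 - p) * g (Suc (cB y)) + p * g (cB y)))"
        unfolding per_y[OF y] by (simp add: krr_def gS g_def)
      also have "\<dots> = F (cB y)" unfolding F_def M_def by (rule max_scale) simp
      finally show ?thesis .
    qed
  qed
  also have "\<dots> = (\<Sum>k\<le>Suc m. F k * real (Suc m choose k))" by (rule group_cB)
  also have "\<dots> = (\<Sum>k\<le>Suc m. 1 / 2 ^ Suc m * ((g k + g (Suc k)) / 2 + (2 * p - 1) / 2 * \<bar>g (Suc k) - g k\<bar>))"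
  proof (rule sum.cong[OF refl])
    fix k assume "k \<in> {..Suc m}"
    then have "real (Suc m choose k) > 0" by simp
    then show "F k * real (Suc m choose k) = 1 / 2 ^ Suc m * ((g k + g (Suc k)) / 2 + (2 * p - 1) / 2 * \<bar>g (Suc k) - g k\<bar>)"
      unfolding F_def M_def max_lemma[OF p2] by simp
  qed
  also have "\<dots> = 1 / 2 ^ Suc m * ((\<Sum>k\<le>Suc m. g k) / 2 + (\<Sum>k\<le>Suc m. g (Suc k)) / 2
      + (2 * p - 1) / 2 * (\<Sum>k\<le>Suc m. \<bar>g (Suc k) - g k\<bar>))"
    unfolding sum_distrib_left[symmetric] sum.distrib sum_divide_distrib[symmetric] add_divide_distrib by simp
  also have "(\<Sum>k\<le>Suc m. \<bar>g (Suc k) - g k\<bar>) = 2 * real (m choose (m div 2))"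
    unfolding g_def by (rule abs_sum)
  also have "(\<Sum>k\<le>Suc m. g (Suc k)) = 2 ^ m"
  proof -
    have "(\<Sum>k\<le>Suc m. g (Suc k)) = (\<Sum>k\<le>m. real (m choose k))" by (simp add: gS binomial_eq_0)
    also have "\<dots> = 2 ^ m" using choose_row_sum[of m] by (metis of_nat_numeral of_nat_power of_nat_sum)
    finally show ?thesis .
  qed
  also have "(\<Sum>k\<le>Suc m. g k) = 2 ^ m"
  proof -
    have "(\<Sum>k\<le>Suc m. g k) = (\<Sum>k\<le>m. real (m choose k))"
      by (simp add: sum.atMost_Suc_shift gS g_def del: sum.atMost_Suc)
    also have "\<dots> = 2 ^ m" using choose_row_sum[of m] by (metis of_nat_numeral of_nat_power of_nat_sum)
    finally show ?thesis .
  qed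
  finally show ?thesis unfolding n by (simp add: field_simps)
qed

end
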